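(* Let $\mathcal{P}$ be a locally geometric poset of rank $r$ and write $\chi_{\mathcal{P}}(t)=c_rt^r+c_{r-1}t^{r-1}+\cdots+c_0$. Then $(-1)^{r-i}c_i>0$ for all $0\le i\le r$.
   Context: All posets are finite, have a unique minimal element $\hat0$ and are ranked (all maximal chains with top $x$ have the same length $\operatorname{rk}(x)$); $\operatorname{rk}(\mathcal{P})=\max_x\operatorname{rk}(x)$. $\chi_{\mathcal{P}}(t)=\sum_x\mu(\hat0,x)t^{\operatorname{rk}(\mathcal{P})-\operatorname{rk}(x)}$, $\mu$ the Möbius function. For $x,y$, $x\vee y$ is the set of minimal upper bounds. A lattice is geometric if for all $x,y$: $y$ covers $x$ iff there is an atom (rank-1 element) $a\not\le x$ with $y=x\vee a$. $\mathcal{P}$ is locally geometric if $\mathcal{P}_{\le x}$ is a geometric lattice for every $x\in\mathcal{P}$. *)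

theory Defs
  imports "HOL-Computational_Algebra.Polynomial"
begin

definition poset_on :: "'a set \<Rightarrow> ('a \<Rightarrow> 'a \<Rightarrow> bool) \<Rightarrow> bool" where
  "poset_on P le \<longleftrightarrow>
     (\<forall>x\<in>P. le x x) \<and>
     (\<forall>x\<in>P. \<forall>y\<in>P. le x y \<and> le y x \<longrightarrow> x = y) \<and>
     (\<forall>x\<in>P. \<forall>y\<in>P. \<forall>z\<in>P. le x y \<and> le y z \<longrightarrow> le x z)"

definition is_minimal :: "'a set \<Rightarrow> ('a \<Rightarrow> 'a \<Rightarrow> bool) \<Rightarrow> 'a \<Rightarrow> bool" where
  "is_minimal P le x \<longleftrightarrow> x \<in> P \<and> (\<forall>y\<in>P. le y x \<longrightarrow> y = x)"

definition has_unique_min :: "'a set \<Rightarrow> ('a \<Rightarrow> 'a \<Rightarrow> bool) \<Rightarrow> bool" where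
  "has_unique_min P le \<longleftrightarrow> (\<exists>!z. is_minimal P le z)"

definition pbot :: "'a set \<Rightarrow> ('a \<Rightarrow> 'a \<Rightarrow> bool) \<Rightarrow> 'a" where
  "pbot P le = (THE z. is_minimal P le z)"

definition covers :: "'a set \<Rightarrow> ('a \<Rightarrow> 'a \<Rightarrow> bool) \<Rightarrow> 'a \<Rightarrow> 'a \<Rightarrow> bool" where
  "covers P le x y \<longleftrightarrow> x \<in> P \<and> y \<in> P \<and> le x y \<and> x \<noteq> y \<and>
     \<not> (\<exists>z\<in>P. le x z \<and> le z y \<and> z \<noteq> x \<and> z \<noteq> y)"

definition max_chain_to :: "'a set \<Rightarrow> ('a \<Rightarrow> 'a \<Rightarrow> bool) \<Rightarrow> 'a list \<Rightarrow> 'a \<Rightarrow> bool" where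
  "max_chain_to P le c x \<longleftrightarrow> c \<noteq> [] \<and> set c \<subseteq> P \<and> hd c = pbot P le \<and> last c = x \<and>
     (\<forall>i. Suc i < length c \<longrightarrow> covers P le (c ! i) (c ! Suc i))"

definition ranked :: "'a set \<Rightarrow> ('a \<Rightarrow> 'a \<Rightarrow> bool) \<Rightarrow> bool" where
  "ranked P le \<longleftrightarrow> (\<forall>x\<in>P. \<forall>c c'. max_chain_to P le c x \<longrightarrow> max_chain_to P le c' x
       \<longrightarrow> length c = length c')"

definition prk :: "'a set \<Rightarrow> ('a \<Rightarrow> 'a \<Rightarrow> bool) \<Rightarrow> 'a \<Rightarrow> nat" where
  "prk P le x = (SOME n. \<exists>c. max_chain_to P le c x \<and> length c = Suc n)"

definition poset_rank :: "'a set \<Rightarrow> ('a \<Rightarrow> 'a \<Rightarrow> bool) \<Rightarrow> nat" where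
  "poset_rank P le = Max (prk P le ` P)"

text \<open>Moebius function: mu(x,x)=1, mu(x,y) = - sum_{x<=z<y} mu(x,z) for x<y, 0 otherwise.
  Defined by recursion with fuel; fuel card P suffices in a finite poset.\<close>
fun mob_fuel :: "nat \<Rightarrow> 'a set \<Rightarrow> ('a \<Rightarrow> 'a \<Rightarrow> bool) \<Rightarrow> 'a \<Rightarrow> 'a \<Rightarrow> int" where
  "mob_fuel 0 P le x y = (if x = y then 1 else 0)"
| "mob_fuel (Suc n) P le x y =
     (if x = y then 1
      else if le x y then - (\<Sum>z\<in>{z\<in>P. le x z \<and> le z y \<and> z \<noteq> y}. mob_fuel n P le x z)
      else 0)"

definition mobius :: "'a set \<Rightarrow> ('a \<Rightarrow> 'a \<Rightarrow> bool) \<Rightarrow> 'a \<Rightarrow> 'a \<Rightarrow> int" where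
  "mobius P le x y = mob_fuel (card P) P le x y"

definition char_poly :: "'a set \<Rightarrow> ('a \<Rightarrow> 'a \<Rightarrow> bool) \<Rightarrow> int poly" where
  "char_poly P le =
     (\<Sum>x\<in>P. monom (mobius P le (pbot P le) x) (poset_rank P le - prk P le x))"

definition min_ubs :: "'a set \<Rightarrow> ('a \<Rightarrow> 'a \<Rightarrow> bool) \<Rightarrow> 'a \<Rightarrow> 'a \<Rightarrow> 'a set" where
  "min_ubs P le x y = {u\<in>P. le x u \<and> le y u \<and>
      (\<forall>v\<in>P. le x v \<and> le y v \<and> le v u \<longrightarrow> v = u)}"

definition is_lattice :: "'a set \<Rightarrow> ('a \<Rightarrow> 'a \<Rightarrow> bool) \<Rightarrow> bool" where
  "is_lattice P le \<longleftrightarrow>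
     (\<forall>x\<in>P. \<forall>y\<in>P. \<exists>j\<in>P. le x j \<and> le y j \<and> (\<forall>u\<in>P. le x u \<and> le y u \<longrightarrow> le j u)) \<and>
     (\<forall>x\<in>P. \<forall>y\<in>P. \<exists>m\<in>P. le m x \<and> le m y \<and> (\<forall>u\<in>P. le u x \<and> le u y \<longrightarrow> le u m))"

definition is_atom :: "'a set \<Rightarrow> ('a \<Rightarrow> 'a \<Rightarrow> bool) \<Rightarrow> 'a \<Rightarrow> bool" where
  "is_atom P le a \<longleftrightarrow> covers P le (pbot P le) a"

definition geometric_lattice :: "'a set \<Rightarrow> ('a \<Rightarrow> 'a \<Rightarrow> bool) \<Rightarrow> bool" where
  "geometric_lattice P le \<longleftrightarrow> is_lattice P le \<and>
     (\<forall>x\<in>P. \<forall>y\<in>P. covers P le x y \<longleftrightarrow>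
        (\<exists>a\<in>P. is_atom P le a \<and> \<not> le a x \<and> min_ubs P le x a = {y}))"

definition locally_geometric :: "'a set \<Rightarrow> ('a \<Rightarrow> 'a \<Rightarrow> bool) \<Rightarrow> bool" where
  "locally_geometric P le \<longleftrightarrow> (\<forall>x\<in>P. geometric_lattice {y\<in>P. le y x} le)"

end

theory Submission
  imports Defs "HOL-Computational_Algebra.Polynomial"
begin


lemma ex_max_fun:
  fixes f :: "'b \<Rightarrow> nat"
  assumes "finite S" "S \<noteq> {}"
  shows "\<exists>z\<in>S. \<forall>w\<in>S. f w \<le> f z"
proof -
  have "Max (f ` S) \<in> f ` S" using assms by simp
  then obtain z where z: "z \<in> S" "f z = Max (f ` S)" by auto
  have "\<forall>w\<in>S. f w \<le> f z" using z assms by simp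
  then show ?thesis using z by blast
qed

locale lgp =
  fixes P :: "'a set" and le :: "'a \<Rightarrow> 'a \<Rightarrow> bool"
  assumes fin: "finite P" and po: "poset_on P le" and um: "has_unique_min P le"
    and rkd: "ranked P le" and lgeo: "locally_geometric P le"
begin

lemma prefl: "x \<in> P \<Longrightarrow> le x x" using po unfolding poset_on_def by blast
lemma pantisym: "x \<in> P \<Longrightarrow> y \<in> P \<Longrightarrow> le x y \<Longrightarrow> le y x \<Longrightarrow> x = y"
  using po unfolding poset_on_def by blast
lemma ptrans: "x \<in> P \<Longrightarrow> y \<in> P \<Longrightarrow> z \<in> P \<Longrightarrow> le x y \<Longrightarrow> le y z \<Longrightarrow> le x z"
  using po unfolding poset_on_def by blast

definition D where "D w = {v\<in>P. le v w}"

lemma D_fin: "finite (D w)" unfolding D_def using fin by simp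

lemma D_less: "v \<in> P \<Longrightarrow> w \<in> P \<Longrightarrow> le v w \<Longrightarrow> v \<noteq> w \<Longrightarrow> card (D v) < card (D w)"
proof -
  assume a: "v \<in> P" "w \<in> P" "le v w" "v \<noteq> w"
  have "D v \<subset> D w"
  proof
    show "D v \<subseteq> D w" unfolding D_def using a ptrans by blast
    have "w \<in> D w" unfolding D_def using a prefl by blast
    moreover have "w \<notin> D v" unfolding D_def using a pantisym by blast
    ultimately show "D v \<noteq> D w" by blast
  qed
  then show ?thesis using D_fin psubset_card_mono by blast
qed

abbreviation b where "b \<equiv> pbot P le"

lemma b_min: "is_minimal P le b"
  using um unfolding has_unique_min_def pbot_def by (rule theI')

lemma b_in: "b \<in> P" using b_min unfolding is_minimal_def by blast

lemma b_le: "x \<in> P \<Longrightarrow> le b x"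
proof -
  assume x: "x \<in> P"
  have "\<exists>m. (m \<in> P \<and> le m x) \<and> (\<forall>y. (y \<in> P \<and> le y x) \<longrightarrow> card (D m) \<le> card (D y))"
    by (rule ex_has_least_nat[where k=x]) (use x prefl in blast)
  then obtain m where m: "m \<in> P" "le m x" "\<And>y. y \<in> P \<Longrightarrow> le y x \<Longrightarrow> card (D m) \<le> card (D y)"
    by blast
  have "is_minimal P le m"
    unfolding is_minimal_def
  proof (intro conjI ballI impI)
    show "m \<in> P" by fact
    fix y assume y: "y \<in> P" "le y m"
    show "y = m"
    proof (rule ccontr)
      assume "y \<noteq> m"
      then have "card (D y) < card (D m)" using D_less y m by blast
      moreover have "card (D m) \<le> card (D y)" using m(3)[of y] y m ptrans x by blast
      ultimately show False by simp
    qed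
  qed
  then have "m = b" using um b_min unfolding has_unique_min_def by blast
  then show ?thesis using m by simp
qed

definition I where "I x y = {z\<in>P. le x z \<and> le z y}"

lemma I_fin: "finite (I x y)" unfolding I_def using fin by simp

lemma I_two: "x \<in> P \<Longrightarrow> y \<in> P \<Longrightarrow> le x y \<Longrightarrow> x \<noteq> y \<Longrightarrow> 2 \<le> card (I x y)"
proof -
  assume a: "x \<in> P" "y \<in> P" "le x y" "x \<noteq> y"
  have "{x, y} \<subseteq> I x y" unfolding I_def using a prefl by auto
  then have "card {x,y} \<le> card (I x y)" using I_fin card_mono by blast
  then show ?thesis using a by simp
qed

lemma I_less: "x \<in> P \<Longrightarrow> y \<in> P \<Longrightarrow> le x y \<Longrightarrow> z \<in> {z\<in>P. le x z \<and> le z y \<and> z \<noteq> y}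
   \<Longrightarrow> card (I x z) < card (I x y)"
proof -
  assume a: "x \<in> P" "y \<in> P" "le x y" "z \<in> {z\<in>P. le x z \<and> le z y \<and> z \<noteq> y}"
  have "I x z \<subset> I x y"
  proof
    show "I x z \<subseteq> I x y" unfolding I_def using a ptrans by blast
    have "y \<in> I x y" unfolding I_def using a prefl by blast
    moreover have "y \<notin> I x z" unfolding I_def using a pantisym by blast
    ultimately show "I x z \<noteq> I x y" by blast
  qed
  then show ?thesis using I_fin psubset_card_mono by blast
qed

lemma mob_fuel_stable:
  "x \<in> P \<Longrightarrow> y \<in> P \<Longrightarrow> card (I x y) \<le> n \<Longrightarrow> card (I x y) \<le> m
   \<Longrightarrow> mob_fuel n P le x y = mob_fuel m P le x y"
proof (induction n arbitrary: m y)
  case 0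
  show ?case
  proof (cases "x = y")
    case True then show ?thesis by (cases m) auto
  next
    case False
    show ?thesis
    proof (cases "le x y")
      case True
      then show ?thesis using I_two[OF 0(1,2) True False] 0(3) by simp
    next
      case f2: False
      then show ?thesis using False by (cases m) auto
    qed
  qed
next
  case (Suc n)
  show ?case
  proof (cases "x = y")
    case True then show ?thesis by (cases m) auto
  next
    case False
    show ?thesis
    proof (cases "le x y")
      case True
      then obtain m' where m': "m = Suc m'" using I_two[OF Suc(2,3) True False] Suc(5)
        by (cases m) auto
      have "(\<Sum>z\<in>{z\<in>P. le x z \<and> le z y \<and> z \<noteq> y}. mob_fuel n P le x z)
          = (\<Sum>z\<in>{z\<in>P. le x z \<and> le z y \<and> z \<noteq> y}. mob_fuel m' P le x z)"
      proof (rule sum.cong[OF refl])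
        fix z assume z: "z \<in> {z\<in>P. le x z \<and> le z y \<and> z \<noteq> y}"
        have c: "card (I x z) < card (I x y)" using I_less[OF Suc(2,3) True z] .
        show "mob_fuel n P le x z = mob_fuel m' P le x z"
          using Suc.IH[of z m'] c Suc(4,5) m' z Suc(2) by simp
      qed
      then show ?thesis using m' True False by simp
    next
      case f2: False
      then show ?thesis using False by (cases m) auto
    qed
  qed
qed

abbreviation mob where "mob y \<equiv> mobius P le b y"

lemma mob_same: "mobius P le x x = 1"
  unfolding mobius_def by (cases "card P") auto

lemma card_I_le: "card (I x y) \<le> card P"
  unfolding I_def using fin by (intro card_mono) auto

lemma mob_rec: "x \<in> P \<Longrightarrow> y \<in> P \<Longrightarrow> le x y \<Longrightarrow> x \<noteq> y \<Longrightarrow>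
  mobius P le x y = - (\<Sum>z\<in>{z\<in>P. le x z \<and> le z y \<and> z \<noteq> y}. mobius P le x z)"
proof -
  assume a: "x \<in> P" "y \<in> P" "le x y" "x \<noteq> y"
  have "2 \<le> card P" using I_two[OF a] card_I_le[of x y] by simp
  then obtain k where k: "card P = Suc k" by (cases "card P") auto
  have "(\<Sum>z\<in>{z\<in>P. le x z \<and> le z y \<and> z \<noteq> y}. mob_fuel k P le x z)
      = (\<Sum>z\<in>{z\<in>P. le x z \<and> le z y \<and> z \<noteq> y}. mobius P le x z)"
  proof (rule sum.cong[OF refl])
    fix z assume z: "z \<in> {z\<in>P. le x z \<and> le z y \<and> z \<noteq> y}"
    have c: "card (I x z) < card (I x y)" using I_less[OF a(1,2,3) z] .
    show "mob_fuel k P le x z = mobius P le x z"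
      unfolding mobius_def using mob_fuel_stable[of x z k "card P"] c card_I_le[of x y] k a z
      by simp
  qed
  then show ?thesis unfolding mobius_def using k a by simp
qed

lemma mob_sum_zero: "w \<in> P \<Longrightarrow> w \<noteq> b \<Longrightarrow> (\<Sum>y\<in>{y\<in>P. le y w}. mob y) = 0"
proof -
  assume w: "w \<in> P" "w \<noteq> b"
  have eq: "{y\<in>P. le y w} = insert w {z\<in>P. le b z \<and> le z w \<and> z \<noteq> w}"
    using w prefl b_le by auto
  have "(\<Sum>y\<in>{y\<in>P. le y w}. mob y) = mob w + (\<Sum>z\<in>{z\<in>P. le b z \<and> le z w \<and> z \<noteq> w}. mob z)"
    unfolding eq using fin by (subst sum.insert) auto
  also have "\<dots> = 0" using mob_rec[OF b_in w(1) b_le[OF w(1)]] w(2) by simp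
  finally show ?thesis .
qed

end

context lgp begin

lemma chain_exists: "x \<in> P \<Longrightarrow> \<exists>c. max_chain_to P le c x"
proof (induction "card (D x)" arbitrary: x rule: less_induct)
  case less
  show ?case
  proof (cases "x = b")
    case True
    then have "max_chain_to P le [b] x" unfolding max_chain_to_def using b_in by auto
    then show ?thesis by blast
  next
    case False
    let ?S = "{z\<in>P. le z x \<and> z \<noteq> x}"
    have "b \<in> ?S" using b_in b_le less False by auto
    then obtain z where z: "z \<in> ?S" "\<And>w. w \<in> ?S \<Longrightarrow> card (D w) \<le> card (D z)"
      using ex_max_fun[of ?S "\<lambda>w. card (D w)"] fin by force
    have cov: "covers P le z x"
      unfolding covers_def
    proof (intro conjI)
      show "\<not> (\<exists>w\<in>P. le z w \<and> le w x \<and> w \<noteq> z \<and> w \<noteq> x)"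
      proof
        assume "\<exists>w\<in>P. le z w \<and> le w x \<and> w \<noteq> z \<and> w \<noteq> x"
        then obtain w where w: "w \<in> P" "le z w" "le w x" "w \<noteq> z" "w \<noteq> x" by blast
        have "card (D z) < card (D w)" using D_less[of z w] w z by auto
        moreover have "card (D w) \<le> card (D z)" using z(2)[of w] w by auto
        ultimately show False by simp
      qed
    qed (use z less in auto)
    have "card (D z) < card (D x)" using D_less[of z x] z less by auto
    then obtain c where c: "max_chain_to P le c z" using less z by blast
    have "max_chain_to P le (c @ [x]) x"
      unfolding max_chain_to_def
    proof (intro conjI allI impI)
      show "c @ [x] \<noteq> []" by simp
      show "set (c @ [x]) \<subseteq> P" using c less unfolding max_chain_to_def by auto
      show "hd (c @ [x]) = b" using c unfolding max_chain_to_def by auto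
      show "last (c @ [x]) = x" by simp
      fix i assume i: "Suc i < length (c @ [x])"
      show "covers P le ((c @ [x]) ! i) ((c @ [x]) ! Suc i)"
      proof (cases "Suc i < length c")
        case True
        then show ?thesis using c unfolding max_chain_to_def by (simp add: nth_append)
      next
        case False
        then have "Suc i = length c" using i by simp
        moreover have "c ! i = z" using c calculation unfolding max_chain_to_def
          by (metis diff_Suc_1 last_conv_nth)
        ultimately show ?thesis using cov by (simp add: nth_append)
      qed
    qed
    then show ?thesis by blast
  qed
qed

lemma prk_eq: "max_chain_to P le c x \<Longrightarrow> length c = Suc (prk P le x)"
proof -
  assume c: "max_chain_to P le c x"
  have x: "x \<in> P" using c unfolding max_chain_to_def by (metis last_in_set subsetD)
  have ne: "c \<noteq> []" using c unfolding max_chain_to_def by auto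
  have "\<exists>c'. max_chain_to P le c' x \<and> length c' = Suc (length c - 1)"
    using c ne by (intro exI[of _ c]) auto
  then have "\<exists>c'. max_chain_to P le c' x \<and> length c' = Suc (prk P le x)"
    unfolding prk_def by (rule someI)
  then obtain c' where "max_chain_to P le c' x" "length c' = Suc (prk P le x)" by blast
  then show ?thesis using rkd c x unfolding ranked_def by metis
qed

lemma chain_take: "max_chain_to P le c x \<Longrightarrow> k < length c \<Longrightarrow>
   max_chain_to P le (take (Suc k) c) (c ! k)"
  unfolding max_chain_to_def
proof (intro conjI allI impI)
  assume c: "c \<noteq> [] \<and> set c \<subseteq> P \<and> hd c = b \<and> last c = x \<and>
      (\<forall>i. Suc i < length c \<longrightarrow> covers P le (c ! i) (c ! Suc i))" and k: "k < length c"
  show "take (Suc k) c \<noteq> []" using c by simp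
  show "set (take (Suc k) c) \<subseteq> P" using c by (meson order_trans set_take_subset)
  show "hd (take (Suc k) c) = b" using c by simp
  show "last (take (Suc k) c) = c ! k" using k
    by (subst last_conv_nth) (auto simp: min_def intro: arg_cong[where f="(!) c"])
  fix i assume "Suc i < length (take (Suc k) c)"
  then show "covers P le (take (Suc k) c ! i) (take (Suc k) c ! Suc i)" using c k by simp
qed

lemma prk_b: "prk P le b = 0"
proof -
  have "max_chain_to P le [b] b" unfolding max_chain_to_def using b_in by auto
  from prk_eq[OF this] show ?thesis by simp
qed

lemma prk_cover: "covers P le y x \<Longrightarrow> prk P le x = Suc (prk P le y)"
proof -
  assume cov: "covers P le y x"
  have y: "y \<in> P" using cov unfolding covers_def by blast
  obtain c where c: "max_chain_to P le c y" using chain_exists[OF y] by blast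
  have "max_chain_to P le (c @ [x]) x"
    unfolding max_chain_to_def
  proof (intro conjI allI impI)
    show "c @ [x] \<noteq> []" by simp
    show "set (c @ [x]) \<subseteq> P" using c cov unfolding max_chain_to_def covers_def by auto
    show "hd (c @ [x]) = b" using c unfolding max_chain_to_def by auto
    show "last (c @ [x]) = x" by simp
    fix i assume i: "Suc i < length (c @ [x])"
    show "covers P le ((c @ [x]) ! i) ((c @ [x]) ! Suc i)"
    proof (cases "Suc i < length c")
      case True
      then show ?thesis using c unfolding max_chain_to_def by (simp add: nth_append)
    next
      case False
      then have "Suc i = length c" using i by simp
      moreover have "c ! i = y" using c calculation unfolding max_chain_to_def
        by (metis diff_Suc_1 last_conv_nth)
      ultimately show ?thesis using cov by (simp add: nth_append)
    qed
  qed
  from prk_eq[OF this] prk_eq[OF c] show ?thesis by simp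
qed

lemma coatom_ex: "x \<in> P \<Longrightarrow> x \<noteq> b \<Longrightarrow> \<exists>y. covers P le y x"
proof -
  assume x: "x \<in> P" "x \<noteq> b"
  obtain c where c: "max_chain_to P le c x" using chain_exists[OF x(1)] by blast
  have "length c \<noteq> 1"
  proof
    assume "length c = 1"
    then obtain u where "c = [u]" by (cases c) auto
    then show False using c x unfolding max_chain_to_def by auto
  qed
  moreover have "c \<noteq> []" using c unfolding max_chain_to_def by auto
  moreover have "length c \<noteq> 0" using calculation by simp
  ultimately have l: "2 \<le> length c" by linarith
  then have "covers P le (c ! (length c - 2)) (c ! Suc (length c - 2))"
    using c unfolding max_chain_to_def by auto
  moreover have "Suc (length c - 2) = length c - 1" using l by simp
  moreover have "c ! (length c - 1) = x" using c unfolding max_chain_to_def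
    by (metis last_conv_nth)
  ultimately show ?thesis by metis
qed

end

context lgp begin

lemma geo: "x \<in> P \<Longrightarrow> geometric_lattice (D x) le"
  using lgeo unfolding locally_geometric_def D_def by blast

lemma pbot_D: assumes x: "x \<in> P" shows "pbot (D x) le = b"
  unfolding pbot_def[of "D x" le]
proof (rule the_equality)
  show "is_minimal (D x) le b" using b_min b_in b_le x unfolding is_minimal_def D_def by auto
  fix z assume "is_minimal (D x) le z"
  then show "z = b" using b_in b_le x unfolding is_minimal_def D_def by auto
qed

lemma D_sub: "D x \<subseteq> P" unfolding D_def by auto

lemma join_ex: "x \<in> P \<Longrightarrow> y \<in> D x \<Longrightarrow> a \<in> D x \<Longrightarrow>
   \<exists>j\<in>D x. le y j \<and> le a j \<and> (\<forall>u\<in>D x. le y u \<and> le a u \<longrightarrow> le j u)"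
  using geo unfolding geometric_lattice_def is_lattice_def by blast

lemma min_ubs_join: "j \<in> D x \<Longrightarrow> y \<in> D x \<Longrightarrow> a \<in> D x \<Longrightarrow> le y j \<Longrightarrow> le a j \<Longrightarrow>
   (\<forall>u\<in>D x. le y u \<and> le a u \<longrightarrow> le j u) \<Longrightarrow> min_ubs (D x) le y a = {j}"
  unfolding min_ubs_def using D_sub pantisym by blast

lemma weisner:
  assumes x: "x \<in> P" and a: "a \<in> D x" "a \<noteq> b"
    and J: "\<And>y. y \<in> D x \<Longrightarrow> J y \<in> D x \<and> le y (J y) \<and> le a (J y) \<and>
              (\<forall>u\<in>D x. le y u \<and> le a u \<longrightarrow> le (J y) u)"
  shows "w \<in> D x \<Longrightarrow> (\<Sum>y\<in>{y\<in>D x. J y = w}. mob y) = 0"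
proof (induction "card (D w)" arbitrary: w rule: less_induct)
  case less
  have wP: "w \<in> P" and wx: "le w x" using less.prems unfolding D_def by auto
  have aP: "a \<in> P" using a D_sub by auto
  have g: "(\<Sum>y\<in>{y\<in>D x. le (J y) w}. mob y) = 0"
  proof (cases "le a w")
    case True
    have eq: "{y\<in>D x. le (J y) w} = {y\<in>P. le y w}"
    proof
      show "{y\<in>D x. le (J y) w} \<subseteq> {y\<in>P. le y w}"
      proof
        fix y assume y: "y \<in> {y\<in>D x. le (J y) w}"
        then have yD: "y \<in> D x" by simp
        have "J y \<in> P" "le y (J y)" using J[OF yD] D_sub by auto
        then show "y \<in> {y\<in>P. le y w}" using ptrans[of y "J y" w] y yD D_sub wP by auto
      qed
      show "{y\<in>P. le y w} \<subseteq> {y\<in>D x. le (J y) w}"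
      proof
        fix y assume y: "y \<in> {y\<in>P. le y w}"
        then have yD: "y \<in> D x" using ptrans wP x wx unfolding D_def by blast
        have "\<forall>u\<in>D x. le y u \<and> le a u \<longrightarrow> le (J y) u" using J[OF yD] by blast
        then show "y \<in> {y\<in>D x. le (J y) w}" using yD y True less.prems by auto
      qed
    qed
    have "w \<noteq> b"
    proof
      assume "w = b"
      then have "a = b" using True aP b_le[OF aP] pantisym[OF aP b_in] by simp
      then show False using a by simp
    qed
    then show ?thesis unfolding eq using mob_sum_zero wP by blast
  next
    case False
    have "{y\<in>D x. le (J y) w} = {}"
    proof (rule ccontr)
      assume "{y\<in>D x. le (J y) w} \<noteq> {}"
      then obtain y where y: "y \<in> D x" "le (J y) w" by blast
      have "J y \<in> P" "le a (J y)" using J[OF y(1)] D_sub by auto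
      then have "le a w" using ptrans[of a "J y" w] y aP wP by auto
      then show False using False by simp
    qed
    then show ?thesis by (metis sum.empty)
  qed
  let ?T = "{v\<in>D x. le v w}"
  have finDx: "finite (D x)" by (rule D_fin)
  have grp: "(\<Sum>v\<in>?T. (\<Sum>y\<in>{y. y \<in> {y\<in>D x. le (J y) w} \<and> J y = v}. mob y))
        = (\<Sum>y\<in>{y\<in>D x. le (J y) w}. mob y)"
    by (rule sum.group) (use finDx J in auto)
  have "(\<Sum>v\<in>?T. (\<Sum>y\<in>{y. y \<in> {y\<in>D x. le (J y) w} \<and> J y = v}. mob y))
      = (\<Sum>v\<in>?T. (\<Sum>y\<in>{y\<in>D x. J y = v}. mob y))"
    by (rule sum.cong[OF refl], rule sum.cong) auto
  also have "\<dots> = (\<Sum>v\<in>insert w (?T - {w}). (\<Sum>y\<in>{y\<in>D x. J y = v}. mob y))"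
    using less.prems wP prefl by (intro sum.cong) auto
  also have "\<dots> = (\<Sum>y\<in>{y\<in>D x. J y = w}. mob y)
      + (\<Sum>v\<in>?T - {w}. (\<Sum>y\<in>{y\<in>D x. J y = v}. mob y))"
    using finDx by (subst sum.insert) auto
  also have "(\<Sum>v\<in>?T - {w}. (\<Sum>y\<in>{y\<in>D x. J y = v}. mob y)) = 0"
  proof (rule sum.neutral, rule ballI)
    fix v assume v: "v \<in> ?T - {w}"
    then have "card (D v) < card (D w)" using D_less[of v w] D_sub wP by auto
    then show "(\<Sum>y\<in>{y\<in>D x. J y = v}. mob y) = 0" using less.hyps v by blast
  qed
  finally show ?case using grp g by simp
qed

lemma sign: "x \<in> P \<Longrightarrow> 0 < (-1) ^ prk P le x * mob x"
proof (induction "prk P le x" arbitrary: x rule: less_induct)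
  case less
  show ?case
  proof (cases "x = b")
    case True
    then show ?thesis using prk_b mob_same by simp
  next
    case False
    note x = less.prems
    obtain y0 where y0: "covers P le y0 x" using coatom_ex[OF x False] by blast
    have y0D: "y0 \<in> D x" using y0 unfolding covers_def D_def by auto
    have xD: "x \<in> D x" using x prefl unfolding D_def by auto
    have covL: "covers (D x) le y0 x" using y0 y0D xD D_sub unfolding covers_def by blast
    obtain a where a: "a \<in> D x" "is_atom (D x) le a" "\<not> le a y0" "min_ubs (D x) le y0 a = {x}"
      using geo[OF x] y0D xD covL unfolding geometric_lattice_def by blast
    have ab: "a \<noteq> b" using a(2) pbot_D[OF x] unfolding is_atom_def covers_def by auto
    have "\<forall>y\<in>D x. \<exists>j. j \<in> D x \<and> le y j \<and> le a j \<and> (\<forall>u\<in>D x. le y u \<and> le a u \<longrightarrow> le j u)"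
      using join_ex[OF x _ a(1)] by blast
    then obtain J where J: "\<And>y. y \<in> D x \<Longrightarrow> J y \<in> D x \<and> le y (J y) \<and> le a (J y) \<and>
              (\<forall>u\<in>D x. le y u \<and> le a u \<longrightarrow> le (J y) u)" by metis
    have mubs: "\<And>y. y \<in> D x \<Longrightarrow> min_ubs (D x) le y a = {J y}"
      using min_ubs_join J a(1) by blast
    have W: "(\<Sum>y\<in>{y\<in>D x. J y = x}. mob y) = 0" using weisner[OF x a(1) ab J xD] by blast
    have Jx: "J x = x"
    proof -
      have j: "J x \<in> D x" "le x (J x)" "\<forall>u\<in>D x. le x u \<and> le a u \<longrightarrow> le (J x) u"
        using J[OF xD] by auto
      have "le a x" using a(1) unfolding D_def by simp
      then have "le (J x) x" using j(3) xD x prefl by blast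
      then show ?thesis using pantisym[of "J x" x] j D_sub x by auto
    qed
    let ?S = "{y\<in>D x. J y = x \<and> y \<noteq> x}"
    have eqS: "{y\<in>D x. J y = x} = insert x ?S" using Jx xD by auto
    have finS: "finite ?S" using D_fin by simp
    have "mob x + (\<Sum>y\<in>?S. mob y) = 0" using W unfolding eqS using finS by simp
    then have mx: "mob x = - (\<Sum>y\<in>?S. mob y)" by simp
    have Scov: "covers P le y x" if y: "y \<in> ?S" for y
    proof -
      have yD: "y \<in> D x" using y by auto
      have "\<not> le a y"
      proof
        assume "le a y"
        have j: "J y \<in> D x" "le y (J y)" "\<forall>u\<in>D x. le y u \<and> le a u \<longrightarrow> le (J y) u"
          using J[OF yD] by auto
        have "le (J y) y" using j(3) yD \<open>le a y\<close> prefl D_sub by blast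
        then have "J y = y" using pantisym[of "J y" y] j yD D_sub by auto
        then show False using y by auto
      qed
      then have "covers (D x) le y x"
        using geo[OF x] yD xD a(1,2) mubs[OF yD] y unfolding geometric_lattice_def by auto
      then show ?thesis using x D_sub unfolding covers_def D_def by auto
    qed
    have y0S: "y0 \<in> ?S" using mubs[OF y0D] a(4) y0D y0 unfolding covers_def by auto
    have pk: "prk P le x = Suc (prk P le y0)" using prk_cover[OF y0] .
    have pos: "0 < (-1) ^ prk P le y0 * mob y" if y: "y \<in> ?S" for y
    proof -
      have "prk P le x = Suc (prk P le y)" using prk_cover[OF Scov[OF y]] .
      then have "prk P le y = prk P le y0" "prk P le y < prk P le x" using pk by auto
      then show ?thesis using less.hyps[of y] y D_sub by auto
    qed
    have "0 < (\<Sum>y\<in>?S. (-1) ^ prk P le y0 * mob y)"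
      using finS y0S pos by (intro sum_pos) auto
    also have "\<dots> = (-1) ^ prk P le y0 * (\<Sum>y\<in>?S. mob y)"
      by (simp add: sum_distrib_left)
    also have "\<dots> = (-1) ^ prk P le x * mob x"
      unfolding mx pk by simp
    finally show ?thesis .
  qed
qed

end


theorem lemma3p4:
  fixes P :: "'a set" and le :: "'a \<Rightarrow> 'a \<Rightarrow> bool"
  assumes "finite P" and "poset_on P le" and "has_unique_min P le"
    and "ranked P le" and "locally_geometric P le"
  shows "\<forall>i \<le> poset_rank P le.
           (-1) ^ (poset_rank P le - i) * coeff (char_poly P le) i > 0"
proof (intro allI impI)
  interpret lgp P le using assms by unfold_locales
  let ?r = "poset_rank P le"
  fix i assume i: "i \<le> ?r"
  have Pne: "P \<noteq> {}" using b_in by auto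
  have prk_le: "prk P le x \<le> ?r" if "x \<in> P" for x
    unfolding poset_rank_def using that fin by simp
  have "coeff (char_poly P le) i = (\<Sum>x\<in>P. (if ?r - prk P le x = i then mob x else 0))"
    unfolding char_poly_def by (simp add: coeff_sum coeff_monom)
  also have "\<dots> = (\<Sum>x\<in>P. (if prk P le x = ?r - i then mob x else 0))"
    by (rule sum.cong[OF refl]) (use prk_le i in auto)
  also have "\<dots> = (\<Sum>x\<in>{x\<in>P. prk P le x = ?r - i}. mob x)"
    using fin by (simp add: sum.inter_filter)
  finally have co: "coeff (char_poly P le) i = (\<Sum>x\<in>{x\<in>P. prk P le x = ?r - i}. mob x)" .
  have "?r \<in> prk P le ` P" unfolding poset_rank_def using fin Pne by simp
  then obtain x0 where x0: "x0 \<in> P" "prk P le x0 = ?r" by auto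
  obtain c where c: "max_chain_to P le c x0" using chain_exists[OF x0(1)] by blast
  have lc: "length c = Suc ?r" using prk_eq[OF c] x0 by simp
  have k: "?r - i < length c" using lc by simp
  have ck: "max_chain_to P le (take (Suc (?r - i)) c) (c ! (?r - i))" using chain_take[OF c k] .
  have "length (take (Suc (?r - i)) c) = Suc (?r - i)" using k by simp
  then have pk: "prk P le (c ! (?r - i)) = ?r - i" using prk_eq[OF ck] by simp
  have ckP: "c ! (?r - i) \<in> P" using c k unfolding max_chain_to_def by (meson nth_mem subsetD)
  have "0 < (\<Sum>x\<in>{x\<in>P. prk P le x = ?r - i}. (-1) ^ (?r - i) * mob x)"
  proof (rule sum_pos)
    show "finite {x\<in>P. prk P le x = ?r - i}" using fin by simp
    show "{x\<in>P. prk P le x = ?r - i} \<noteq> {}" using ckP pk by blast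
    fix x assume "x \<in> {x\<in>P. prk P le x = ?r - i}"
    then show "0 < (-1) ^ (?r - i) * mob x" using sign[of x] by auto
  qed
  then show "(-1) ^ (?r - i) * coeff (char_poly P le) i > 0"
    unfolding co by (simp add: sum_distrib_left)
qed

end
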